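(* Let $\alpha\in(0,1)$ and let $G=(V,E)$ be a finite connected graph satisfying CD$_\alpha(F;0)$ for a CD-function $F$ with relaxation function $\varphi$. Suppose $u:[0,\infty)\times V\to(0,\infty)$ solves the heat equation on $G$. Then $$-\frac{\Delta(u^\alpha)}{\alpha u^\alpha}=\mathcal L_\alpha(\log u)\le\varphi(t)\quad\text{on }(0,\infty)\times V,$$ and consequently $$\partial_t(\log u)\ge\Psi_\Upsilon(\log u)-\tfrac1\alpha\Psi_{\Upsilon_\alpha}(\log u)-\varphi(t)\quad\text{on }(0,\infty)\times V.$$
   Context: Graphs are undirected, edge weights $w_{xy}=w_{yx}>0$, $\mu:V\to(0,\infty)$, $\Delta u(x)=\frac1{\mu(x)}\sum_{y\sim x}w_{xy}(u(y)-u(x))$, $L=-\Delta$, $\Psi_H(v)(x)=\frac1{\mu(x)}\sum_{y\sim x}w_{xy}H(v(y)-v(x))$, $\Upsilon(z)=e^z-1-z$, $\Upsilon_\alpha(z)=\Upsilon(\alpha z)$. $\mathcal L_\alpha(v)(x)=-\frac1\alpha\Psi_{\Upsilon'}(\alpha v)(x)$; $\mathcal C_\alpha(v)(x)=\frac1{\mu(x)}\sum_{y\sim x}w_{xy}e^{\alpha(v(y)-v(x))}(\Psi_{\Upsilon'}(v)(y)-\Psi_{\Upsilon'}(v)(x))$. A CD-function is a continuous $F:[0,\infty)\to[0,\infty)$ with $F(0)=0$, $F(x)/x$ strictly increasing on $(0,\infty)$, $\int_1^\infty dr/F(r)<\infty$; its relaxation function is the unique positive solution of $\dot\varphi+F(\varphi)=0$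 on $(0,\infty)$ with $\varphi(0+)=\infty$. $G$ satisfies CD$_\alpha(F;0)$ if for every $x\in V$ and $v:V\to\mathbb R$ with $\mathcal L_\alpha(v)(x)>0$ and $\mathcal L_\alpha(v)(x)\ge\mathcal L_\alpha(v)(y)$ for all $y\sim x$, $\mathcal C_\alpha(v)(x)\ge F(Lv(x))$. A solution of the heat equation is $u$, $C^1$ in $t$, with $\partial_tu=\Delta u$ on $[0,\infty)\times V$. *)

theory Defs
  imports "HOL-Analysis.Analysis"
begin

text \<open>The edge weights are
  w :: 'v => 'v => real, symmetric and nonnegative; x ~ y iff w x y > 0.
  Sums over neighbours are sums over all vertices weighted by w (non-neighbours
  have weight 0).\<close>

definition adj :: "('v \<Rightarrow> 'v \<Rightarrow> real) \<Rightarrow> 'v \<Rightarrow> 'v \<Rightarrow> bool" where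
  "adj w x y \<longleftrightarrow> w x y > 0"

definition weighted_graph :: "('v::finite \<Rightarrow> 'v \<Rightarrow> real) \<Rightarrow> ('v \<Rightarrow> real) \<Rightarrow> bool" where
  "weighted_graph w \<mu> \<longleftrightarrow> (\<forall>x y. w x y = w y x) \<and> (\<forall>x y. w x y \<ge> 0) \<and> (\<forall>x. \<mu> x > 0)"

definition connected_graph :: "('v \<Rightarrow> 'v \<Rightarrow> real) \<Rightarrow> bool" where
  "connected_graph w \<longleftrightarrow> (\<forall>x y. (adj w)\<^sup>*\<^sup>* x y)"

definition laplacian :: "('v::finite \<Rightarrow> 'v \<Rightarrow> real) \<Rightarrow> ('v \<Rightarrow> real) \<Rightarrow> ('v \<Rightarrow> real) \<Rightarrow> 'v \<Rightarrow> real" where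
  "laplacian w \<mu> u x = (1 / \<mu> x) * (\<Sum>y\<in>UNIV. w x y * (u y - u x))"

definition Lop :: "('v::finite \<Rightarrow> 'v \<Rightarrow> real) \<Rightarrow> ('v \<Rightarrow> real) \<Rightarrow> ('v \<Rightarrow> real) \<Rightarrow> 'v \<Rightarrow> real" where
  "Lop w \<mu> u x = - laplacian w \<mu> u x"

definition Psi :: "('v::finite \<Rightarrow> 'v \<Rightarrow> real) \<Rightarrow> ('v \<Rightarrow> real) \<Rightarrow> (real \<Rightarrow> real) \<Rightarrow> ('v \<Rightarrow> real) \<Rightarrow> 'v \<Rightarrow> real" where
  "Psi w \<mu> H v x = (1 / \<mu> x) * (\<Sum>y\<in>UNIV. w x y * H (v y - v x))"

definition Upsilon :: "real \<Rightarrow> real" where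
  "Upsilon z = exp z - 1 - z"

definition Upsilon' :: "real \<Rightarrow> real" where
  "Upsilon' z = exp z - 1"

definition Upsilon_a :: "real \<Rightarrow> real \<Rightarrow> real" where
  "Upsilon_a \<alpha> z = Upsilon (\<alpha> * z)"

definition L_alpha :: "('v::finite \<Rightarrow> 'v \<Rightarrow> real) \<Rightarrow> ('v \<Rightarrow> real) \<Rightarrow> real \<Rightarrow> ('v \<Rightarrow> real) \<Rightarrow> 'v \<Rightarrow> real" where
  "L_alpha w \<mu> \<alpha> v x = - (1 / \<alpha>) * Psi w \<mu> Upsilon' (\<lambda>y. \<alpha> * v y) x"

definition C_alpha :: "('v::finite \<Rightarrow> 'v \<Rightarrow> real) \<Rightarrow> ('v \<Rightarrow> real) \<Rightarrow> real \<Rightarrow> ('v \<Rightarrow> real) \<Rightarrow> 'v \<Rightarrow> real" where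
  "C_alpha w \<mu> \<alpha> v x = (1 / \<mu> x) * (\<Sum>y\<in>UNIV. w x y * exp (\<alpha> * (v y - v x)) *
      (Psi w \<mu> Upsilon' v y - Psi w \<mu> Upsilon' v x))"

definition CD_function :: "(real \<Rightarrow> real) \<Rightarrow> bool" where
  "CD_function F \<longleftrightarrow> continuous_on {0..} F \<and> F 0 = 0 \<and> (\<forall>x\<ge>0. F x \<ge> 0)
     \<and> strict_mono_on {0<..} (\<lambda>x. F x / x)
     \<and> (\<lambda>r. 1 / F r) integrable_on {1..}"

text \<open>phi is the relaxation function of F: positive solution of phi' + F(phi) = 0 on
  (0,oo) with phi(0+) = oo (such a solution is unique).\<close>
definition relaxation_function :: "(real \<Rightarrow> real) \<Rightarrow> (real \<Rightarrow> real) \<Rightarrow> bool" where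
  "relaxation_function F \<phi> \<longleftrightarrow>
     (\<forall>t>0. \<phi> t > 0 \<and> (\<phi> has_real_derivative (- F (\<phi> t))) (at t))
     \<and> filterlim \<phi> at_top (at_right 0)"

definition CD_alpha :: "('v::finite \<Rightarrow> 'v \<Rightarrow> real) \<Rightarrow> ('v \<Rightarrow> real) \<Rightarrow> real \<Rightarrow> (real \<Rightarrow> real) \<Rightarrow> bool" where
  "CD_alpha w \<mu> \<alpha> F \<longleftrightarrow> (\<forall>x v. L_alpha w \<mu> \<alpha> v x > 0
       \<and> (\<forall>y. adj w x y \<longrightarrow> L_alpha w \<mu> \<alpha> v x \<ge> L_alpha w \<mu> \<alpha> v y)
       \<longrightarrow> C_alpha w \<mu> \<alpha> v x \<ge> F (Lop w \<mu> v x))"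

definition heat_solution :: "('v::finite \<Rightarrow> 'v \<Rightarrow> real) \<Rightarrow> ('v \<Rightarrow> real) \<Rightarrow> (real \<Rightarrow> 'v \<Rightarrow> real) \<Rightarrow> bool" where
  "heat_solution w \<mu> u \<longleftrightarrow> (\<forall>x. (\<forall>t\<ge>0. ((\<lambda>s. u s x) has_real_derivative laplacian w \<mu> (u t) x) (at t within {0..}))
       \<and> continuous_on {0..} (\<lambda>t. laplacian w \<mu> (u t) x))"

end

theory Submission
  imports Defs
begin


lemma psi_up:
  fixes w :: "'v::finite \<Rightarrow> 'v \<Rightarrow> real"
  assumes pos: "\<And>z. U z > 0"
  shows "Psi w \<mu> Upsilon' (\<lambda>z. ln (U z)) y = laplacian w \<mu> U y / U y"
proof -
  have hy: "U y > 0" using pos .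
  have "w y z * (exp (ln (U z) - ln (U y)) - 1) = w y z * (U z - U y) / U y" for z
  proof -
    have hz: "U z > 0" using pos .
    have "exp (ln (U z) - ln (U y)) = U z / U y" using hy hz by (simp add: exp_diff)
    then show ?thesis using hy by (simp add: field_simps)
  qed
  then show ?thesis unfolding Psi_def Upsilon'_def laplacian_def
    by (simp add: sum_divide_distrib[symmetric])
qed

lemma dH:
  fixes w :: "'v::finite \<Rightarrow> 'v \<Rightarrow> real"
  assumes dv: "\<And>y. ((\<lambda>s. V s y) has_real_derivative P y) (at t)"
    and anz: "\<alpha> \<noteq> 0"
    and P: "\<And>y. P y = Psi w \<mu> Upsilon' (V t) y"
  shows "((\<lambda>s. L_alpha w \<mu> \<alpha> (V s) x) has_real_derivative - C_alpha w \<mu> \<alpha> (V t) x) (at t)"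
proof -
  have d1: "\<And>y. ((\<lambda>s. w x y * Upsilon' (\<alpha> * V s y - \<alpha> * V s x)) has_real_derivative
     w x y * (exp (\<alpha> * V t y - \<alpha> * V t x) * (\<alpha> * P y - \<alpha> * P x))) (at t)"
    unfolding Upsilon'_def
    by (rule derivative_eq_intros dv refl | simp)+
  have d2: "((\<lambda>s. \<Sum>y\<in>UNIV. w x y * Upsilon' (\<alpha> * V s y - \<alpha> * V s x)) has_real_derivative
     (\<Sum>y\<in>UNIV. w x y * (exp (\<alpha> * V t y - \<alpha> * V t x) * (\<alpha> * P y - \<alpha> * P x)))) (at t)"
    by (rule DERIV_sum) (rule d1)
  have d3: "((\<lambda>s. L_alpha w \<mu> \<alpha> (V s) x) has_real_derivative
     - (1/\<alpha>) * ((1 / \<mu> x) * (\<Sum>y\<in>UNIV. w x y * (exp (\<alpha> * V t y - \<alpha> * V t x) * (\<alpha> * P y - \<alpha> * P x))))) (at t)"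
    unfolding L_alpha_def Psi_def
    by (intro DERIV_cmult d2)
  show ?thesis
  proof -
    have "- (1/\<alpha>) * ((1 / \<mu> x) * (\<Sum>y\<in>UNIV. w x y * (exp (\<alpha> * V t y - \<alpha> * V t x) * (\<alpha> * P y - \<alpha> * P x))))
      = - C_alpha w \<mu> \<alpha> (V t) x"
      unfolding C_alpha_def P[symmetric] using anz
      by (simp add: sum_distrib_left right_diff_distrib algebra_simps sum_subtractf sum_negf)
    then show ?thesis using d3 by simp
  qed
qed


lemma L_le_Lop:
  fixes w :: "'v::finite \<Rightarrow> 'v \<Rightarrow> real"
  assumes a: "\<alpha> > 0" and wg: "weighted_graph w \<mu>"
  shows "L_alpha w \<mu> \<alpha> v x \<le> Lop w \<mu> v x"
proof -
  have w0: "\<And>y. w x y \<ge> 0" and m: "\<mu> x > 0" using wg unfolding weighted_graph_def by auto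
  have "\<And>y. w x y * (\<alpha> * (v y - v x)) \<le> w x y * Upsilon' (\<alpha> * v y - \<alpha> * v x)"
    unfolding Upsilon'_def
    using exp_ge_add_one_self[of "\<alpha> * v y - \<alpha> * v x" for y] w0
    by (intro mult_left_mono) (auto simp: algebra_simps)
  then have "(\<Sum>y\<in>UNIV. w x y * (\<alpha> * (v y - v x))) \<le> (\<Sum>y\<in>UNIV. w x y * Upsilon' (\<alpha> * v y - \<alpha> * v x))"
    by (rule sum_mono)
  then have "\<alpha> * (\<Sum>y\<in>UNIV. w x y * (v y - v x)) \<le> (\<Sum>y\<in>UNIV. w x y * Upsilon' (\<alpha> * v y - \<alpha> * v x))"
    by (simp add: sum_distrib_left algebra_simps)
  then have "(\<Sum>y\<in>UNIV. w x y * (v y - v x)) \<le> (1/\<alpha>) * (\<Sum>y\<in>UNIV. w x y * Upsilon' (\<alpha> * v y - \<alpha> * v x))"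
    using a by (simp add: field_simps)
  then have "(1/\<mu> x) * (\<Sum>y\<in>UNIV. w x y * (v y - v x)) \<le> (1/\<mu> x) * ((1/\<alpha>) * (\<Sum>y\<in>UNIV. w x y * Upsilon' (\<alpha> * v y - \<alpha> * v x)))"
    using m by (intro mult_left_mono) auto
  then show ?thesis unfolding L_alpha_def Lop_def laplacian_def Psi_def by (simp add: algebra_simps)
qed

lemma F_mono:
  assumes "CD_function F" "0 < a" "a \<le> b"
  shows "F a \<le> F b"
proof (cases "a = b")
  case False
  then have ab: "a < b" using assms by simp
  have sm: "F a / a < F b / b" using assms(1,2) ab unfolding CD_function_def strict_mono_on_def by auto
  have "F a \<ge> 0" using assms unfolding CD_function_def by auto
  then have "F a / a \<ge> 0" using assms by simp
  have "F a = a * (F a / a)" using assms by simp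
  also have "\<dots> \<le> b * (F a / a)" using \<open>F a / a \<ge> 0\<close> ab by (intro mult_right_mono) auto
  also have "\<dots> \<le> b * (F b / b)" using sm ab assms by (intro mult_left_mono) auto
  also have "\<dots> = F b" using ab assms by simp
  finally show ?thesis .
qed simp

lemma F_strict:
  assumes "CD_function F" "0 < a" "a < b"
  shows "F a < F b"
proof -
  have sm: "F a / a < F b / b" using assms unfolding CD_function_def strict_mono_on_def by auto
  have "F a \<ge> 0" using assms unfolding CD_function_def by auto
  then have "F a / a \<ge> 0" using assms by simp
  have "F a = a * (F a / a)" using assms by simp
  also have "\<dots> \<le> b * (F a / a)" using \<open>F a / a \<ge> 0\<close> assms by (intro mult_right_mono) auto
  also have "\<dots> < b * (F b / b)" using sm assms by (intro mult_strict_left_mono) auto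
  also have "\<dots> = F b" using assms by simp
  finally show ?thesis .
qed

lemma part1:
  fixes w :: "'v::finite \<Rightarrow> 'v \<Rightarrow> real"
  assumes pos: "\<And>y. U y > 0" and a: "\<alpha> > 0"
  shows "- laplacian w \<mu> (\<lambda>y. U y powr \<alpha>) x / (\<alpha> * U x powr \<alpha>) = L_alpha w \<mu> \<alpha> (\<lambda>y. ln (U y)) x"
proof -
  have hx: "U x > 0" using pos .
  have e: "\<And>y. w x y * Upsilon' (\<alpha> * ln (U y) - \<alpha> * ln (U x)) = w x y * (U y powr \<alpha> - U x powr \<alpha>) / U x powr \<alpha>"
  proof -
    fix y
    have hy: "U y > 0" using pos .
    have "exp (\<alpha> * ln (U y) - \<alpha> * ln (U x)) = U y powr \<alpha> / U x powr \<alpha>"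
      using hx hy by (simp add: exp_diff powr_def)
    then show "w x y * Upsilon' (\<alpha> * ln (U y) - \<alpha> * ln (U x)) = w x y * (U y powr \<alpha> - U x powr \<alpha>) / U x powr \<alpha>"
      unfolding Upsilon'_def using hx by (simp add: field_simps)
  qed
  show ?thesis unfolding L_alpha_def Psi_def laplacian_def e
    using hx a by (simp add: sum_divide_distrib[symmetric] field_simps)
qed

lemma part3:
  fixes w :: "'v::finite \<Rightarrow> 'v \<Rightarrow> real"
  assumes a: "\<alpha> > 0"
  shows "Psi w \<mu> Upsilon v x - (1 / \<alpha>) * Psi w \<mu> (Upsilon_a \<alpha>) v x
     = Psi w \<mu> Upsilon' v x + L_alpha w \<mu> \<alpha> v x"
proof -
  have e: "\<And>y. w x y * Upsilon (v y - v x) - (1/\<alpha>) * (w x y * Upsilon_a \<alpha> (v y - v x))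
     = w x y * Upsilon' (v y - v x) - (1/\<alpha>) * (w x y * Upsilon' (\<alpha> * v y - \<alpha> * v x))"
    unfolding Upsilon_def Upsilon_a_def Upsilon'_def using a by (simp add: field_simps)
  have "(\<Sum>y\<in>UNIV. w x y * Upsilon (v y - v x)) - (1/\<alpha>) * (\<Sum>y\<in>UNIV. w x y * Upsilon_a \<alpha> (v y - v x))
     = (\<Sum>y\<in>UNIV. w x y * Upsilon' (v y - v x)) - (1/\<alpha>) * (\<Sum>y\<in>UNIV. w x y * Upsilon' (\<alpha> * v y - \<alpha> * v x))"
    using e by (simp add: sum_distrib_left sum_subtractf[symmetric])
  then have "(1/\<mu> x) * ((\<Sum>y\<in>UNIV. w x y * Upsilon (v y - v x)) - (1/\<alpha>) * (\<Sum>y\<in>UNIV. w x y * Upsilon_a \<alpha> (v y - v x)))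
     = (1/\<mu> x) * ((\<Sum>y\<in>UNIV. w x y * Upsilon' (v y - v x)) - (1/\<alpha>) * (\<Sum>y\<in>UNIV. w x y * Upsilon' (\<alpha> * v y - \<alpha> * v x)))"
    by simp
  then show ?thesis unfolding Psi_def L_alpha_def by (simp add: algebra_simps)
qed

theorem theorem4p2:
  fixes w :: "'v::finite \<Rightarrow> 'v \<Rightarrow> real" and \<mu> :: "'v \<Rightarrow> real"
    and \<alpha> :: real and F \<phi> :: "real \<Rightarrow> real" and u :: "real \<Rightarrow> 'v \<Rightarrow> real"
  assumes "0 < \<alpha>" "\<alpha> < 1"
    and "weighted_graph w \<mu>" and "connected_graph w"
    and "CD_function F" and "relaxation_function F \<phi>"
    and "CD_alpha w \<mu> \<alpha> F"
    and "\<forall>t\<ge>0. \<forall>x. u t x > 0"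
    and "heat_solution w \<mu> u"
  shows "\<forall>t>0. \<forall>x.
      - laplacian w \<mu> (\<lambda>y. u t y powr \<alpha>) x / (\<alpha> * u t x powr \<alpha>) = L_alpha w \<mu> \<alpha> (\<lambda>y. ln (u t y)) x
      \<and> L_alpha w \<mu> \<alpha> (\<lambda>y. ln (u t y)) x \<le> \<phi> t
      \<and> (\<exists>d. ((\<lambda>s. ln (u s x)) has_real_derivative d) (at t)
             \<and> d \<ge> Psi w \<mu> Upsilon (\<lambda>y. ln (u t y)) x
                   - (1 / \<alpha>) * Psi w \<mu> (Upsilon_a \<alpha>) (\<lambda>y. ln (u t y)) x - \<phi> t)"
proof -
  note a = assms(1)
  define H where "H = (\<lambda>t x. L_alpha w \<mu> \<alpha> (\<lambda>y. ln (u t y)) x)"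
  have upos: "\<And>t x. t \<ge> 0 \<Longrightarrow> u t x > 0" using assms(8) by auto
  have duw: "\<And>t y. t \<ge> 0 \<Longrightarrow> ((\<lambda>s. u s y) has_real_derivative laplacian w \<mu> (u t) y) (at t within {0..})"
    using assms(9) unfolding heat_solution_def by auto
  have du: "((\<lambda>s. u s y) has_real_derivative laplacian w \<mu> (u t) y) (at t)" if "t > 0" for t y
  proof -
    have "at t within {0..} = at t" using that by (intro at_within_interior) (simp add: interior_real_atLeast)
    then show ?thesis using duw[of t y] that by simp
  qed
  have dv: "((\<lambda>s. ln (u s y)) has_real_derivative Psi w \<mu> Upsilon' (\<lambda>z. ln (u t z)) y) (at t)"
    if "t > 0" for t y
  proof -
    have "((\<lambda>s. ln (u s y)) has_real_derivative (1 / u t y) * laplacian w \<mu> (u t) y) (at t)"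
      by (rule DERIV_chain2[OF DERIV_ln_divide[OF upos] du]) (use that in auto)
    moreover have "Psi w \<mu> Upsilon' (\<lambda>z. ln (u t z)) y = laplacian w \<mu> (u t) y / u t y"
      by (rule psi_up) (use that upos in auto)
    ultimately show ?thesis by simp
  qed
  have dHt: "((\<lambda>s. H s x) has_real_derivative - C_alpha w \<mu> \<alpha> (\<lambda>y. ln (u t y)) x) (at t)"
    if "t > 0" for t x
    unfolding H_def
    by (rule dH[where V="\<lambda>s y. ln (u s y)" and P="\<lambda>y. Psi w \<mu> Upsilon' (\<lambda>z. ln (u t z)) y"])
       (use that a dv in auto)
  have cu: "continuous_on {0..} (\<lambda>s. u s y)" for y
    by (rule DERIV_continuous_on[OF duw]) auto
  have upne: "\<forall>s\<in>{0..}. u s y \<noteq> 0" for y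
    using upos by (metis atLeast_iff less_irrefl)
  have contH: "continuous_on {0..} (\<lambda>s. H s x)" for x
    unfolding H_def L_alpha_def Psi_def Upsilon'_def
    by (intro continuous_intros continuous_on_ln cu) (simp_all add: upne)
  have phipos: "\<And>t. t > 0 \<Longrightarrow> \<phi> t > 0" using assms(6) unfolding relaxation_function_def by auto
  have phid: "\<And>t. t > 0 \<Longrightarrow> (\<phi> has_real_derivative (- F (\<phi> t))) (at t)"
    using assms(6) unfolding relaxation_function_def by auto
  have cphi: "continuous_on {c..} \<phi>" if "c > 0" for c
  proof (intro continuous_at_imp_continuous_on ballI)
    fix s assume "s \<in> {c..}"
    then have "s > 0" using that by simp
    then show "isCont \<phi> s" using phid by (blast intro: DERIV_isCont)
  qed
  have strict: "\<forall>t>0. \<forall>x. H t x < \<phi> t + \<epsilon>" if eps: "\<epsilon> > 0" for \<epsilon>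
  proof (rule ccontr)
    assume "\<not> (\<forall>t>0. \<forall>x. H t x < \<phi> t + \<epsilon>)"
    then obtain t1 x1 where t1: "t1 > 0" "H t1 x1 \<ge> \<phi> t1 + \<epsilon>" by (auto simp: not_less)
    have ev: "\<forall>\<^sub>F s in at_right 0. \<forall>x. H s x < \<phi> s + \<epsilon>"
    proof (rule eventually_all_finite)
      fix x
      have "((\<lambda>s. H s x) \<longlongrightarrow> H 0 x) (at 0 within {0..})"
        using contH[of x] unfolding continuous_on_def by auto
      then have "((\<lambda>s. H s x) \<longlongrightarrow> H 0 x) (at_right 0)"
        by (rule tendsto_within_subset) auto
      then have e1: "\<forall>\<^sub>F s in at_right 0. H s x < H 0 x + 1"
        by (rule order_tendstoD) simp
      have e2: "\<forall>\<^sub>F s in at_right 0. H 0 x + 1 < \<phi> s"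
        using assms(6) unfolding relaxation_function_def filterlim_at_top_dense by auto
      show "\<forall>\<^sub>F s in at_right 0. H s x < \<phi> s + \<epsilon>"
        using e1 e2 by eventually_elim (use eps in auto)
    qed
    then obtain \<delta> where \<delta>: "\<delta> > 0" "\<And>s. 0 < s \<Longrightarrow> s < \<delta> \<Longrightarrow> \<forall>x. H s x < \<phi> s + \<epsilon>"
      unfolding eventually_at_right_field by auto
    define S where "S = (\<Union>x. {s \<in> {\<delta>/2..}. (\<lambda>s. \<phi> s + \<epsilon>) s \<le> H s x})"
    have clS: "closed S" unfolding S_def
    proof (rule closed_UN)
      show "\<forall>x\<in>UNIV. closed {s \<in> {\<delta>/2..}. (\<lambda>s. \<phi> s + \<epsilon>) s \<le> H s x}"
      proof
        fix x
        show "closed {s \<in> {\<delta>/2..}. (\<lambda>s. \<phi> s + \<epsilon>) s \<le> H s x}"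
          by (rule continuous_on_closed_Collect_le)
            (auto intro!: continuous_intros cphi continuous_on_subset[OF contH] simp: \<delta> less_imp_le)
      qed
    qed simp
    have Sge: "\<And>s. s \<in> S \<Longrightarrow> s \<ge> \<delta>"
    proof -
      fix s assume "s \<in> S"
      then obtain x where "s \<ge> \<delta>/2" "\<phi> s + \<epsilon> \<le> H s x" unfolding S_def by auto
      then show "s \<ge> \<delta>" using \<delta> by (meson field_sum_of_halves half_gt_zero less_le_trans not_le)
    qed
    have t1S: "t1 \<in> S"
    proof -
      have "t1 \<ge> \<delta>" using \<delta>(2)[of t1] t1 by (meson not_le not_less)
      then show ?thesis unfolding S_def using t1 \<delta>(1) by auto
    qed
    have bdd: "bdd_below S" unfolding bdd_below_def using Sge by blast
    define t0 where "t0 = Inf S"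
    have t0S: "t0 \<in> S" unfolding t0_def using closed_contains_Inf[OF _ bdd clS] t1S by auto
    have t0d: "t0 \<ge> \<delta>" using Sge t0S by auto
    have t0p: "t0 > 0" using t0d \<delta> by simp
    obtain x0 where x0: "\<phi> t0 + \<epsilon> \<le> H t0 x0" using t0S unfolding S_def by auto
    have below: "H s x < \<phi> s + \<epsilon>" if "0 < s" "s < t0" for s x
    proof (cases "s < \<delta>")
      case True then show ?thesis using \<delta>(2) that by auto
    next
      case False
      show ?thesis
      proof (rule ccontr)
        assume "\<not> H s x < \<phi> s + \<epsilon>"
        then have "s \<in> S" unfolding S_def using False \<delta> by (auto simp: not_less)
        then have "t0 \<le> s" unfolding t0_def using bdd by (simp add: cInf_lower)
        then show False using that by simp
      qed
    qed
    have maxp: "H t0 y \<le> \<phi> t0 + \<epsilon>" for y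
    proof -
      let ?g = "\<lambda>s. H s y - \<phi> s"
      have "isCont ?g t0" using dHt[OF t0p] phid[OF t0p] by (intro isCont_diff DERIV_isCont) auto
      then have "(?g \<longlongrightarrow> ?g t0) (at t0)" by (rule isContD)
      then have lim: "(?g \<longlongrightarrow> ?g t0) (at_left t0)" by (rule tendsto_mono[rotated]) (simp add: at_le)
      have "\<forall>\<^sub>F s in at_left t0. ?g s \<le> \<epsilon>"
        unfolding eventually_at_left_field
        using t0p by (intro exI[of _ 0]) (auto dest!: below[of _ y] simp: less_imp_le)
      then have "?g t0 \<le> \<epsilon>" using tendsto_upperbound[OF lim] by auto
      then show ?thesis by simp
    qed
    have Heq: "H t0 x0 = \<phi> t0 + \<epsilon>" using x0 maxp[of x0] by simp
    let ?v = "\<lambda>y. ln (u t0 y)"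
    have Hpos: "H t0 x0 > 0" using Heq phipos[OF t0p] eps by simp
    have CD: "C_alpha w \<mu> \<alpha> ?v x0 \<ge> F (Lop w \<mu> ?v x0)"
      using assms(7) Hpos maxp Heq unfolding CD_alpha_def H_def by auto
    have "Lop w \<mu> ?v x0 \<ge> H t0 x0" unfolding H_def by (rule L_le_Lop[OF a assms(3)])
    then have F1: "F (Lop w \<mu> ?v x0) \<ge> F (\<phi> t0 + \<epsilon>)" using F_mono[OF assms(5)] Hpos Heq by auto
    have F2: "F (\<phi> t0) < F (\<phi> t0 + \<epsilon>)" using F_strict[OF assms(5)] phipos[OF t0p] eps by auto
    let ?g = "\<lambda>s. H s x0 - \<phi> s"
    have dg: "(?g has_real_derivative (- C_alpha w \<mu> \<alpha> ?v x0 - (- F (\<phi> t0)))) (at t0)"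
      by (intro DERIV_diff dHt[OF t0p] phid[OF t0p])
    have neg: "- C_alpha w \<mu> \<alpha> ?v x0 - (- F (\<phi> t0)) < 0" using CD F1 F2 by linarith
    obtain d where d: "d > 0" "\<And>h. h > 0 \<Longrightarrow> h < d \<Longrightarrow> ?g t0 < ?g (t0 - h)"
      using DERIV_neg_dec_left[OF dg neg] by auto
    define h where "h = min (d/2) (t0/2)"
    have h: "h > 0" "h < d" "t0 - h > 0" "t0 - h < t0" using d t0p unfolding h_def by auto
    have "?g t0 < ?g (t0 - h)" using d(2) h by auto
    moreover have "?g (t0 - h) < \<epsilon>" using below[of "t0 - h" x0] h by simp
    ultimately show False using Heq by simp
  qed
  have main: "H t x \<le> \<phi> t" if "t > 0" for t x
  proof (rule field_le_epsilon)
    fix e :: real assume "e > 0"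
    then show "H t x \<le> \<phi> t + e" using strict[of e] that by (auto simp: less_imp_le)
  qed
  show ?thesis
  proof (intro allI impI conjI)
    fix t x assume t: "(t::real) > 0"
    show "- laplacian w \<mu> (\<lambda>y. u t y powr \<alpha>) x / (\<alpha> * u t x powr \<alpha>) = L_alpha w \<mu> \<alpha> (\<lambda>y. ln (u t y)) x"
      by (rule part1) (use t upos a in auto)
    show "L_alpha w \<mu> \<alpha> (\<lambda>y. ln (u t y)) x \<le> \<phi> t" using main[OF t] unfolding H_def .
    show "\<exists>d. ((\<lambda>s. ln (u s x)) has_real_derivative d) (at t)
             \<and> d \<ge> Psi w \<mu> Upsilon (\<lambda>y. ln (u t y)) x
                   - (1 / \<alpha>) * Psi w \<mu> (Upsilon_a \<alpha>) (\<lambda>y. ln (u t y)) x - \<phi> t"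
    proof (intro exI conjI)
      show "((\<lambda>s. ln (u s x)) has_real_derivative Psi w \<mu> Upsilon' (\<lambda>z. ln (u t z)) x) (at t)"
        using dv[OF t] .
      show "Psi w \<mu> Upsilon (\<lambda>y. ln (u t y)) x
                   - (1 / \<alpha>) * Psi w \<mu> (Upsilon_a \<alpha>) (\<lambda>y. ln (u t y)) x - \<phi> t
           \<le> Psi w \<mu> Upsilon' (\<lambda>z. ln (u t z)) x"
        using part3[OF a, of w \<mu> "\<lambda>y. ln (u t y)" x] main[OF t, of x] unfolding H_def by simp
    qed
  qed
qed

end
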